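(* Let $\alpha\in\{1/2,1\}$ and $\beta\in(0,1]$. The function $\rho\mapsto\Lambda_*(\rho,\beta,\alpha)$ is decreasing on $[0,1]$, with \[ \lim_{\rho\to0}\Lambda_*(\rho,\beta,\alpha)=\Lambda_*(0,\beta,\alpha)=1+\sqrt\beta,\qquad \lim_{\rho\to1}\Lambda_*(\rho,\beta,\alpha)=\Lambda_*(1,\beta,\alpha)=0. \] For $\rho\in(0,1)$, $\Lambda_*(\rho,\beta,\alpha)$ is the unique root in $\Lambda$ of \[ P_\gamma\bigl(\Lambda^2;\tfrac12\bigr)-\Lambda\,P_\gamma(\Lambda^2;0)=\frac{\Lambda\rho}{\alpha(1-\rho)}, \] and the left-hand side of this equation is a decreasing function of $\Lambda$.
   Context: For $\gamma>0$, $\gamma_\pm=(1\pm\sqrt\gamma)^2$, the Marčenko–Pastur density is $p_\gamma(t)=\frac{1}{2\pi\gamma t}\sqrt{(\gamma_+-t)(t-\gamma_-)}\mathbf 1_{[\gamma_-,\gamma_+]}(t)$, and $P_\gamma(x;k)=\int_x^{\gamma_+}t^kp_\gamma(t)\,dt$. For $\alpha\in\{1/2,1\}$, \[ \mathbf M(\Lambda;\rho,\tilde\rho,\alpha)=\rho+\tilde\rho-\rho\tilde\rho+(1-\tilde\rho)\Bigl[\rho\Lambda^2+\alpha(1-\rho)\bigl(P_\gamma(\Lambda^2;1)-2\Lambda P_\gamma(\Lambda^2;\tfrac12)+\Lambda^2P_\gamma(\Lambda^2;0)\bigr)\Bigr], \] with $\gamma=(\tilde\rho-\rho\tilde\rho)/(\rho-\rho\tilde\rho)$.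 Here $\tilde\rho=\beta\rho$, so $\gamma=\beta(1-\rho)/(1-\beta\rho)$, and $\Lambda_*(\rho,\beta,\alpha)=\operatorname{argmin}_\Lambda\mathbf M(\Lambda;\rho,\beta\rho,\alpha)$ (at $\rho\in\{0,1\}$ defined by the stated values/limits). *)

theory Defs
  imports "HOL-Analysis.Analysis"
begin

definition gam_plus :: "real \<Rightarrow> real" where
  "gam_plus \<gamma> = (1 + sqrt \<gamma>)^2"

definition gam_minus :: "real \<Rightarrow> real" where
  "gam_minus \<gamma> = (1 - sqrt \<gamma>)^2"

definition mp_density :: "real \<Rightarrow> real \<Rightarrow> real" where
  "mp_density \<gamma> t =
     (if gam_minus \<gamma> \<le> t \<and> t \<le> gam_plus \<gamma>
      then sqrt ((gam_plus \<gamma> - t) * (t - gam_minus \<gamma>)) / (2 * pi * \<gamma> * t)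
      else 0)"

definition MP_P :: "real \<Rightarrow> real \<Rightarrow> real \<Rightarrow> real" where
  "MP_P \<gamma> x k = (LINT t:{x..gam_plus \<gamma>}|lborel. t powr k * mp_density \<gamma> t)"

definition MPgamma :: "real \<Rightarrow> real \<Rightarrow> real" where
  "MPgamma \<rho> \<rho>t = (\<rho>t - \<rho> * \<rho>t) / (\<rho> - \<rho> * \<rho>t)"

definition Mfun :: "real \<Rightarrow> real \<Rightarrow> real \<Rightarrow> real \<Rightarrow> real" where
  "Mfun \<Lambda> \<rho> \<rho>t \<alpha> =
     (let \<gamma> = MPgamma \<rho> \<rho>t in
      \<rho> + \<rho>t - \<rho> * \<rho>t + (1 - \<rho>t) * (\<rho> * \<Lambda>^2 + \<alpha> * (1 - \<rho>) *
        (MP_P \<gamma> (\<Lambda>^2) 1 - 2 * \<Lambda> * MP_P \<gamma> (\<Lambda>^2) (1/2) + \<Lambda>^2 * MP_P \<gamma> (\<Lambda>^2) 0)))"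

definition Lstar :: "real \<Rightarrow> real \<Rightarrow> real \<Rightarrow> real" where
  "Lstar \<rho> \<beta> \<alpha> =
     (if \<rho> = 0 then 1 + sqrt \<beta>
      else if \<rho> = 1 then 0
      else (THE \<Lambda>. 0 \<le> \<Lambda> \<and> (\<forall>L\<ge>0. Mfun \<Lambda> \<rho> (\<beta> * \<rho>) \<alpha> \<le> Mfun L \<rho> (\<beta> * \<rho>) \<alpha>)))"

end

theory Submission
  imports Defs
begin

definition Qg :: "real \<Rightarrow> real \<Rightarrow> real" where
  "Qg g t = 2*t*(1+g) - t^2 - (1-g)^2"

definition wq :: "real \<Rightarrow> real \<Rightarrow> real" where
  "wq g t = sqrt (max 0 (Qg g t)) / (2*pi*t)"

lemma gam_prod:
  assumes "0 \<le> g"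
  shows "(gam_plus g - t) * (t - gam_minus g) = Qg g t"
  using assms unfolding gam_plus_def gam_minus_def Qg_def
  by (simp add: power2_eq_square algebra_simps)

lemma gam_le: "0 \<le> g \<Longrightarrow> gam_minus g \<le> gam_plus g"
  unfolding gam_plus_def gam_minus_def by (simp add: power2_eq_square algebra_simps)

lemma dens_eq:
  assumes "0 < g"
  shows "mp_density g t = wq g t / g"
proof -
  have p: "(gam_plus g - t) * (t - gam_minus g) = Qg g t" using gam_prod assms by simp
  have le: "gam_minus g \<le> gam_plus g" using gam_le assms by simp
  have iff: "(gam_minus g \<le> t \<and> t \<le> gam_plus g) \<longleftrightarrow> 0 \<le> Qg g t"
  proof
    assume "gam_minus g \<le> t \<and> t \<le> gam_plus g" thus "0 \<le> Qg g t" using p[symmetric]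
      by (simp add: mult_nonneg_nonneg)
  next
    assume h: "0 \<le> Qg g t"
    show "gam_minus g \<le> t \<and> t \<le> gam_plus g"
    proof (rule ccontr)
      assume "\<not> ?thesis"
      hence "(gam_plus g - t) * (t - gam_minus g) < 0" using le
        by (auto simp: mult_neg_pos mult_pos_neg)
      thus False using h p by simp
    qed
  qed
  show ?thesis
  proof (cases "0 \<le> Qg g t")
    case True
    thus ?thesis using iff p assms unfolding mp_density_def wq_def by (simp add: field_simps)
  next
    case False
    hence "max 0 (Qg g t) = 0" by simp
    hence "wq g t = 0" unfolding wq_def by simp
    moreover have "mp_density g t = 0" using iff False unfolding mp_density_def by auto
    ultimately show ?thesis by simp
  qed
qed

lemma Qg_pos_imp:
  assumes "0 \<le> g" "g \<le> 1" "0 < Qg g t"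
  shows "0 < t" "t \<le> 4"
proof -
  show "0 < t"
  proof (rule ccontr)
    assume "\<not> 0 < t"
    hence "2*t*(1+g) \<le> 0" using assms(1) by (simp add: mult_nonpos_nonneg)
    moreover have "0 \<le> (1-g)^2" "0 \<le> t^2" by simp_all
    ultimately have "Qg g t \<le> 0" unfolding Qg_def by linarith
    thus False using assms by simp
  qed
  show "t \<le> 4"
  proof (rule ccontr)
    assume "\<not> t \<le> 4"
    hence "t*t > t*(2*(1+g))" using assms(1,2) by (intro mult_strict_left_mono) auto
    hence "t*t > 2*t*(1+g)" by (simp add: algebra_simps)
    moreover have "0 \<le> (1-g)^2" "t^2 = t*t" by (simp_all add: power2_eq_square)
    ultimately have "Qg g t \<le> 0" unfolding Qg_def by linarith
    thus False using assms by simp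
  qed
qed

lemma Qg_le: "0 \<le> g \<Longrightarrow> g \<le> 1 \<Longrightarrow> 0 \<le> t \<Longrightarrow> Qg g t \<le> 4*t"
proof -
  assume a: "0 \<le> g" "g \<le> 1" "0 \<le> t"
  have "t*(2*(1+g)) \<le> t*4" using a by (intro mult_left_mono) auto
  moreover have "0 \<le> (1-g)^2" "0 \<le> t^2" by simp_all
  moreover have "2*t*(1+g) = t*(2*(1+g))" by simp
  ultimately show ?thesis unfolding Qg_def by linarith
qed

lemma Qg_le2: "Qg g t \<le> g*(2*t+2)"
proof -
  have "Qg g t - g*(2*t+2) = -((t-1)^2) - g^2" unfolding Qg_def by (simp add: power2_eq_square algebra_simps)
  moreover have "0 \<le> (t-1)^2" "0 \<le> g^2" by simp_all
  ultimately show ?thesis by linarith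
qed

lemma Qg_mono: "0 \<le> g2 \<Longrightarrow> g2 \<le> g1 \<Longrightarrow> g1 \<le> 1 \<Longrightarrow> 0 \<le> t \<Longrightarrow> Qg g2 t \<le> Qg g1 t"
proof -
  assume a: "0 \<le> g2" "g2 \<le> g1" "g1 \<le> 1" "0 \<le> t"
  have "Qg g1 t - Qg g2 t = (g1-g2)*(2*t+2-g1-g2)" unfolding Qg_def by (simp add: power2_eq_square algebra_simps)
  moreover have "(g1-g2)*(2*t+2-g1-g2) \<ge> 0" using a by simp
  ultimately show ?thesis by simp
qed

lemma wq_nonneg: "0 \<le> t \<Longrightarrow> 0 \<le> wq g t"
  unfolding wq_def by simp

lemma wq_nonneg': "0 \<le> g \<Longrightarrow> g \<le> 1 \<Longrightarrow> 0 \<le> wq g t"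
  using Qg_pos_imp[of g t] unfolding wq_def
  by (cases "0 < Qg g t") (auto simp: max_def)

lemma wq_meas[measurable]: "wq g \<in> borel_measurable borel"
  unfolding wq_def Qg_def by measurable

lemma m_int: "integrable lborel (\<lambda>t::real. indicator {0<..4} t / sqrt t)"
proof -
  have "(\<lambda>x. x powr (-1/2)) integrable_on {0<..4::real}"
    by (rule integrable_on_powr_from_0') auto
  hence "(\<lambda>x. x powr (-1/2)) absolutely_integrable_on {0<..4::real}"
    by (rule nonnegative_absolutely_integrable_1) auto
  hence i1: "integrable lebesgue (\<lambda>t::real. indicator {0<..4} t *\<^sub>R t powr (-1/2))"
    unfolding set_integrable_def .
  have eq: "(\<lambda>t::real. indicator {0<..4} t *\<^sub>R t powr (-1/2)) = (\<lambda>t. indicator {0<..4} t / sqrt t)"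
  proof
    fix t :: real
    show "indicator {0<..4} t *\<^sub>R t powr (-1/2) = indicator {0<..4} t / sqrt t"
    proof (cases "0 < t")
      case True
      have "t powr (-1/2) = t powr (-(1/2))" by simp
      also have "\<dots> = inverse (t powr (1/2))" by (rule powr_minus)
      also have "\<dots> = inverse (sqrt t)" using powr_half_sqrt[of t] True by (metis less_imp_le)
      also have "\<dots> = 1 / sqrt t" by (rule inverse_eq_divide)
      finally have "t powr (-1/2) = 1 / sqrt t" .
      thus ?thesis by simp
    next
      case False thus ?thesis by (simp add: indicator_def)
    qed
  qed
  have "integrable lebesgue (\<lambda>t::real. indicator {0<..4} t / sqrt t)" using i1 eq by simp
  thus ?thesis by (subst (asm) integrable_completion) measurable
qed

lemma wq_supp: "wq g t \<noteq> 0 \<Longrightarrow> 0 < Qg g t"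
  unfolding wq_def by (cases "0 < Qg g t") auto

lemma wq_zero: "0 \<le> g \<Longrightarrow> g \<le> 1 \<Longrightarrow> \<not> (0 < t \<and> t \<le> 4) \<Longrightarrow> wq g t = 0"
  using wq_supp Qg_pos_imp by blast

lemma wq_bound:
  assumes "0 \<le> g" "g \<le> 1"
  shows "wq g t \<le> indicator {0<..4} t / sqrt t"
proof (cases "wq g t = 0")
  case True thus ?thesis by (simp add: indicator_def)
next
  case False
  hence Q: "0 < Qg g t" by (rule wq_supp)
  hence t: "0 < t" "t \<le> 4" using Qg_pos_imp[OF assms] by auto
  have "sqrt (max 0 (Qg g t)) \<le> sqrt (4*t)" using Qg_le[OF assms] t Q by simp
  also have "\<dots> = 2 * sqrt t" by (simp add: real_sqrt_mult)
  finally have "wq g t \<le> 2 * sqrt t / (2*pi*t)" unfolding wq_def using t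
    by (intro divide_right_mono) auto
  also have "\<dots> = 2 * sqrt t / (2*pi*(sqrt t * sqrt t))" using t by simp
  also have "\<dots> = 1 / (pi * sqrt t)" using t by (simp add: field_simps)
  also have "\<dots> \<le> 1 / sqrt t" using t pi_ge_two
    by (intro divide_left_mono) (auto simp: mult_pos_pos)
  finally show ?thesis using t by (simp add: indicator_def)
qed

lemma int_wq:
  assumes "0 \<le> g" "g \<le> 1" "h \<in> borel_measurable borel" "\<And>t. 0 < t \<Longrightarrow> t \<le> 4 \<Longrightarrow> \<bar>h t\<bar> \<le> C"
  shows "integrable lborel (\<lambda>t. h t * wq g t)"
proof (rule Bochner_Integration.integrable_bound[where f="\<lambda>t. C * (indicator {0<..4} t / sqrt t)"])
  show "integrable lborel (\<lambda>t. C * (indicator {0<..4} t / sqrt t))"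
    using m_int by (rule integrable_mult_right)
  show "(\<lambda>t. h t * wq g t) \<in> borel_measurable lborel" using assms(3) by measurable
  show "AE t in lborel. norm (h t * wq g t) \<le> norm (C * (indicator {0<..4} t / sqrt t))"
  proof (rule AE_I2)
    fix t :: real
    show "norm (h t * wq g t) \<le> norm (C * (indicator {0<..4} t / sqrt t))"
    proof (cases "0 < t \<and> t \<le> 4")
      case True
      have w0: "0 \<le> wq g t" using True by (simp add: wq_nonneg)
      have "norm (h t * wq g t) = \<bar>h t\<bar> * wq g t" using w0 by (simp add: abs_mult)
      also have "\<dots> \<le> C * (1 / sqrt t)"
        using assms(4)[of t] True w0 wq_bound[OF assms(1,2), of t]
        by (intro mult_mono) (auto simp: indicator_def)
      also have "\<dots> \<le> \<bar>C\<bar> * (1 / sqrt t)" using True by (intro mult_right_mono) auto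
      also have "\<dots> = norm (C * (indicator {0<..4} t / sqrt t))" using True by (simp add: indicator_def abs_mult)
      finally show ?thesis .
    next
      case False thus ?thesis using wq_zero[OF assms(1,2) False] by simp
    qed
  qed
qed

lemma Q_supp:
  assumes "0 \<le> g" "0 < Qg g t"
  shows "gam_minus g \<le> t \<and> t \<le> gam_plus g"
proof (rule ccontr)
  have p: "(gam_plus g - t) * (t - gam_minus g) = Qg g t" using gam_prod assms by simp
  have le: "gam_minus g \<le> gam_plus g" using gam_le assms by simp
  assume "\<not> ?thesis"
  hence "(gam_plus g - t) * (t - gam_minus g) < 0" using le
    by (auto simp: mult_neg_pos mult_pos_neg)
  thus False using assms p by simp
qed

definition GG :: "real \<Rightarrow> real \<Rightarrow> real" where
  "GG g L = integral\<^sup>L lborel (\<lambda>t. max (sqrt t - L) 0 * wq g t)"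

definition HH :: "real \<Rightarrow> real \<Rightarrow> real" where
  "HH g L = integral\<^sup>L lborel (\<lambda>t. (max (sqrt t - L) 0)^2 * wq g t)"

lemma powr_k_bound:
  fixes t k :: real
  assumes "k \<in> {0, 1/2, 1}" "0 < t" "t \<le> 4"
  shows "\<bar>t powr k\<bar> \<le> 4"
proof -
  have "sqrt t \<le> sqrt 4" using assms by (intro real_sqrt_le_mono) auto
  moreover have "sqrt (4::real) = 2" by (rule real_sqrt_unique) auto
  ultimately have s: "sqrt t \<le> 2" by simp
  have "k = 0 \<or> k = 1/2 \<or> k = 1" using assms(1) by auto
  moreover {assume "k = 0" hence ?thesis using assms(2) by simp}
  moreover {assume k: "k = 1/2"
    have "t powr k = sqrt t" unfolding k using assms(2) by (simp add: powr_half_sqrt)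
    hence ?thesis using s assms(2) by simp}
  moreover {assume "k = 1" hence ?thesis using assms(2,3) by simp}
  ultimately show ?thesis by blast
qed

lemma MPP_eq:
  assumes g: "0 < g" "g \<le> 1" and x: "0 \<le> x"
  shows "MP_P g x k = integral\<^sup>L lborel (\<lambda>t. ((if x \<le> t then t powr k else 0) / g) * wq g t)"
  unfolding MP_P_def set_lebesgue_integral_def
proof (rule Bochner_Integration.integral_cong[OF refl])
  fix t :: real
  show "indicator {x..gam_plus g} t *\<^sub>R (t powr k * mp_density g t) =
        (if x \<le> t then t powr k else 0) / g * wq g t"
  proof (cases "wq g t = 0")
    case True thus ?thesis using dens_eq[OF g(1)] by simp
  next
    case False
    hence "0 < Qg g t" by (rule wq_supp)
    hence "t \<le> gam_plus g" using Q_supp g by auto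
    thus ?thesis using dens_eq[OF g(1), of t] by (auto simp: indicator_def)
  qed
qed

lemma int_h:
  assumes g: "0 < g" "g \<le> 1" and k: "k \<in> {0, 1/2, 1}"
  shows "integrable lborel (\<lambda>t. ((if x \<le> t then t powr k else 0) / g) * wq g t)"
proof (rule int_wq[where C="4/g"])
  show "0 \<le> g" "g \<le> 1" using g by auto
  show "(\<lambda>t. (if x \<le> t then t powr k else 0) / g) \<in> borel_measurable borel" by measurable
  fix t :: real assume t: "0 < t" "t \<le> 4"
  have "\<bar>(if x \<le> t then t powr k else 0)\<bar> \<le> 4" using powr_k_bound[OF k t] by auto
  thus "\<bar>(if x \<le> t then t powr k else 0) / g\<bar> \<le> 4 / g" using g
    by (simp add: abs_div divide_right_mono)
qed

lemma sqrt_ge_iff: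
  assumes "0 \<le> L" "0 \<le> t"
  shows "L \<le> sqrt t \<longleftrightarrow> L^2 \<le> t"
proof -
  have "sqrt (L^2) = L" using assms by simp
  thus ?thesis by (metis real_sqrt_le_iff)
qed

lemma lemA:
  assumes g: "0 < g" "g \<le> 1" and L: "0 \<le> L"
  shows "MP_P g (L^2) (1/2) - L * MP_P g (L^2) 0 = GG g L / g"
proof -
  define h where "h = (\<lambda>k t. ((if L^2 \<le> t then t powr k else 0) / g) * wq g t)"
  have M: "MP_P g (L^2) k = integral\<^sup>L lborel (h k)" for k
    unfolding h_def using MPP_eq[OF g, of "L^2"] by simp
  have I: "integrable lborel (h k)" if "k \<in> {0, 1/2, 1}" for k
    unfolding h_def using int_h[OF g that] by simp
  have "MP_P g (L^2) (1/2) - L * MP_P g (L^2) 0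
      = integral\<^sup>L lborel (h (1/2)) - L * integral\<^sup>L lborel (h 0)"
    using M by simp
  also have "\<dots> = integral\<^sup>L lborel (\<lambda>t. h (1/2) t - L * h 0 t)"
    using I[of "1/2"] I[of 0]
    by (simp add: Bochner_Integration.integral_diff integral_mult_right_zero)
  also have "\<dots> = integral\<^sup>L lborel (\<lambda>t. max (sqrt t - L) 0 * wq g t / g)"
  proof (rule Bochner_Integration.integral_cong[OF refl])
    fix t :: real
    show "h (1/2) t - L * h 0 t = max (sqrt t - L) 0 * wq g t / g"
    proof (cases "wq g t = 0")
      case True thus ?thesis by (simp add: h_def)
    next
      case False
      hence "0 < t" using wq_supp Qg_pos_imp(1)[of g t] g by auto
      hence e: "L \<le> sqrt t \<longleftrightarrow> L^2 \<le> t" using sqrt_ge_iff L by auto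
      show ?thesis
      proof (cases "L^2 \<le> t")
        case True
        thus ?thesis using e \<open>0 < t\<close> g by (simp add: h_def powr_half_sqrt field_simps)
      next
        case False
        thus ?thesis using e by (simp add: h_def max_def)
      qed
    qed
  qed
  also have "\<dots> = GG g L / g" unfolding GG_def by simp
  finally show ?thesis .
qed

lemma lemB:
  assumes g: "0 < g" "g \<le> 1" and L: "0 \<le> L"
  shows "MP_P g (L^2) 1 - 2 * L * MP_P g (L^2) (1/2) + L^2 * MP_P g (L^2) 0 = HH g L / g"
proof -
  define h where "h = (\<lambda>k t. ((if L^2 \<le> t then t powr k else 0) / g) * wq g t)"
  have M: "MP_P g (L^2) k = integral\<^sup>L lborel (h k)" for k
    unfolding h_def using MPP_eq[OF g, of "L^2"] by simp
  have I: "integrable lborel (h k)" if "k \<in> {0, 1/2, 1}" for k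
    unfolding h_def using int_h[OF g that] by simp
  have "MP_P g (L^2) 1 - 2 * L * MP_P g (L^2) (1/2) + L^2 * MP_P g (L^2) 0
      = integral\<^sup>L lborel (h 1) - 2 * L * integral\<^sup>L lborel (h (1/2)) + L^2 * integral\<^sup>L lborel (h 0)"
    using M by simp
  also have "\<dots> = integral\<^sup>L lborel (\<lambda>t. h 1 t - 2 * L * h (1/2) t + L^2 * h 0 t)"
    using I[of 1] I[of "1/2"] I[of 0]
    by (simp add: Bochner_Integration.integral_diff Bochner_Integration.integral_add integral_mult_right_zero)
  also have "\<dots> = integral\<^sup>L lborel (\<lambda>t. (max (sqrt t - L) 0)^2 * wq g t / g)"
  proof (rule Bochner_Integration.integral_cong[OF refl])
    fix t :: real
    show "h 1 t - 2 * L * h (1/2) t + L^2 * h 0 t = (max (sqrt t - L) 0)^2 * wq g t / g"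
    proof (cases "wq g t = 0")
      case True thus ?thesis by (simp add: h_def)
    next
      case False
      hence "0 < t" using wq_supp Qg_pos_imp(1)[of g t] g by auto
      hence e: "L \<le> sqrt t \<longleftrightarrow> L^2 \<le> t" using sqrt_ge_iff L by auto
      have st: "sqrt t ^ 2 = t" using \<open>0 < t\<close> by simp
      show ?thesis
      proof (cases "L^2 \<le> t")
        case True
        hence "max (sqrt t - L) 0 = sqrt t - L" using e by simp
        moreover have "(sqrt t - L)^2 = t - 2*L*(sqrt t) + L^2" using st by (simp add: power2_diff)
        ultimately have B: "(max (sqrt t - L) 0)^2 = t - 2*L*(sqrt t) + L^2" by simp
        have A: "h 1 t - 2*L*h (1/2) t + L^2 * h 0 t = (t - 2*L*(sqrt t) + L^2) * wq g t / g"
          using True \<open>0 < t\<close> g by (simp add: h_def powr_half_sqrt field_simps)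
        show ?thesis by (simp only: A B)
      next
        case False
        thus ?thesis using e by (simp add: h_def max_def)
      qed
    qed
  qed
  also have "\<dots> = HH g L / g" unfolding HH_def by simp
  finally show ?thesis .
qed

lemma max_bound:
  fixes t L :: real
  assumes "0 < t" "t \<le> 4"
  shows "\<bar>max (sqrt t - L) 0\<bar> \<le> 2 + \<bar>L\<bar>"
proof -
  have "sqrt t \<le> sqrt 4" using real_sqrt_le_mono[OF assms(2)] .
  moreover have "sqrt (4::real) = 2" by (rule real_sqrt_unique) auto
  moreover have "0 \<le> sqrt t" using assms(1) by simp
  ultimately show ?thesis by (auto simp: max_def)
qed

lemma int_G:
  assumes "0 \<le> g" "g \<le> 1"
  shows "integrable lborel (\<lambda>t. max (sqrt t - L) 0 * wq g t)"
proof (rule int_wq[OF assms, where C="2 + \<bar>L\<bar>"])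
  show "(\<lambda>t. max (sqrt t - L) 0) \<in> borel_measurable borel" by measurable
  fix t :: real assume "0 < t" "t \<le> 4"
  thus "\<bar>max (sqrt t - L) 0\<bar> \<le> 2 + \<bar>L\<bar>" by (rule max_bound)
qed

lemma int_H:
  assumes "0 \<le> g" "g \<le> 1"
  shows "integrable lborel (\<lambda>t. (max (sqrt t - L) 0)^2 * wq g t)"
proof (rule int_wq[OF assms, where C="(2 + \<bar>L\<bar>)^2"])
  show "(\<lambda>t. (max (sqrt t - L) 0)^2) \<in> borel_measurable borel" by measurable
  fix t :: real assume "0 < t" "t \<le> 4"
  hence "\<bar>max (sqrt t - L) 0\<bar> \<le> 2 + \<bar>L\<bar>" by (rule max_bound)
  hence "\<bar>max (sqrt t - L) 0\<bar>^2 \<le> (2 + \<bar>L\<bar>)^2" by (intro power_mono) auto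
  thus "\<bar>(max (sqrt t - L) 0)^2\<bar> \<le> (2 + \<bar>L\<bar>)^2" by simp
qed

lemma int_W:
  assumes "0 \<le> g" "g \<le> 1"
  shows "integrable lborel (wq g)"
  using int_wq[OF assms, where h="\<lambda>t. 1" and C=1] by simp

lemma GG_anti:
  assumes "0 \<le> g" "g \<le> 1" "L1 \<le> L2"
  shows "GG g L2 \<le> GG g L1"
  unfolding GG_def
proof (rule integral_mono[OF int_G[OF assms(1,2)] int_G[OF assms(1,2)]])
  fix t :: real
  have "0 \<le> wq g t" using wq_nonneg'[OF assms(1,2)] .
  moreover have "max (sqrt t - L2) 0 \<le> max (sqrt t - L1) 0" using assms(3) by auto
  ultimately show "max (sqrt t - L2) 0 * wq g t \<le> max (sqrt t - L1) 0 * wq g t"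
    by (rule mult_right_mono[rotated])
qed

lemma GG_nonneg:
  assumes "0 \<le> g" "g \<le> 1"
  shows "0 \<le> GG g L"
  unfolding GG_def using wq_nonneg'[OF assms] by (intro Bochner_Integration.integral_nonneg) auto

lemma wq_mono:
  assumes "0 \<le> g2" "g2 \<le> g1" "g1 \<le> 1"
  shows "wq g2 t \<le> wq g1 t"
proof (cases "0 < t")
  case True
  have "Qg g2 t \<le> Qg g1 t" using Qg_mono assms True by auto
  hence "sqrt (max 0 (Qg g2 t)) \<le> sqrt (max 0 (Qg g1 t))" by (intro real_sqrt_le_mono) auto
  thus ?thesis unfolding wq_def using True by (intro divide_right_mono) auto
next
  case False
  hence "wq g2 t = 0" "wq g1 t = 0" using wq_zero assms by auto
  thus ?thesis by simp
qed

lemma GG_mono_g: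
  assumes "0 \<le> g2" "g2 \<le> g1" "g1 \<le> 1"
  shows "GG g2 L \<le> GG g1 L"
  unfolding GG_def
proof (rule integral_mono[OF int_G int_G])
  show "0 \<le> g2" "g2 \<le> 1" "0 \<le> g1" "g1 \<le> 1" using assms by auto
  fix t :: real
  show "max (sqrt t - L) 0 * wq g2 t \<le> max (sqrt t - L) 0 * wq g1 t"
    using wq_mono[OF assms] by (intro mult_left_mono) auto
qed

lemma GG_zero:
  assumes "0 < g" "g \<le> 1" "1 + sqrt g \<le> L"
  shows "GG g L = 0"
proof -
  have "GG g L = integral\<^sup>L lborel (\<lambda>t::real. 0::real)"
    unfolding GG_def
  proof (rule Bochner_Integration.integral_cong[OF refl])
    fix t :: real
    show "max (sqrt t - L) 0 * wq g t = 0"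
    proof (cases "wq g t = 0")
      case False
      hence Q: "0 < Qg g t" by (rule wq_supp)
      hence "t \<le> gam_plus g" using Q_supp assms by auto
      hence "sqrt t \<le> sqrt ((1 + sqrt g)^2)" unfolding gam_plus_def by (rule real_sqrt_le_mono)
      also have "\<dots> = 1 + sqrt g" using assms(1) by simp
      finally have "max (sqrt t - L) 0 = 0" using assms by auto
      thus ?thesis by simp
    qed simp
  qed
  thus ?thesis by simp
qed

lemma conv_pt:
  fixes x y :: real
  shows "(max x 0)^2 + 2 * max x 0 * (y - x) \<le> (max y 0)^2"
proof (cases "x \<le> 0")
  case True thus ?thesis by (simp add: max_def)
next
  case False
  have "x^2 + 2*x*(y-x) \<le> (max y 0)^2"
  proof (cases "y \<le> 0")
    case True
    have "x * y \<le> 0" using True False by (simp add: mult_nonneg_nonpos)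
    moreover have "x^2 + 2*x*(y-x) = 2*(x*y) - x*x" by (simp add: power2_eq_square algebra_simps)
    moreover have "0 \<le> x*x" by simp
    ultimately have "x^2 + 2*x*(y-x) \<le> 0" by linarith
    thus ?thesis using zero_le_power2[of "max y 0"] by linarith
  next
    case False
    have "0 \<le> (y - x)^2" by simp
    hence "x^2 + 2*x*(y-x) \<le> y^2" by (simp add: power2_eq_square algebra_simps)
    thus ?thesis using False by (simp add: max_def)
  qed
  note r = this
  have mx: "max x 0 = x" using False by simp
  show ?thesis using r by (simp only: mx)
qed

lemma HH_conv:
  assumes "0 \<le> g" "g \<le> 1"
  shows "HH g La - 2 * (L - La) * GG g La \<le> HH g L"
proof -
  have "HH g La - 2 * (L - La) * GG g La =
    integral\<^sup>L lborel (\<lambda>t. (max (sqrt t - La) 0)^2 * wq g t - 2 * (L - La) * (max (sqrt t - La) 0 * wq g t))"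
    unfolding HH_def GG_def using int_H[OF assms, of La] int_G[OF assms, of La]
    by (simp add: Bochner_Integration.integral_diff integral_mult_right_zero)
  also have "\<dots> \<le> HH g L" unfolding HH_def
  proof (rule integral_mono)
    show "integrable lborel (\<lambda>t. (max (sqrt t - La) 0)^2 * wq g t - 2 * (L - La) * (max (sqrt t - La) 0 * wq g t))"
      using int_H[OF assms, of La] int_G[OF assms, of La] by auto
    show "integrable lborel (\<lambda>t. (max (sqrt t - L) 0)^2 * wq g t)" using int_H[OF assms] .
    fix t :: real
    have w: "0 \<le> wq g t" using wq_nonneg'[OF assms] .
    have "(max (sqrt t - La) 0)^2 + 2 * max (sqrt t - La) 0 * ((sqrt t - L) - (sqrt t - La)) \<le> (max (sqrt t - L) 0)^2"
      by (rule conv_pt)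
    hence "((max (sqrt t - La) 0)^2 - 2 * (L - La) * max (sqrt t - La) 0) * wq g t \<le> (max (sqrt t - L) 0)^2 * wq g t"
      using w by (intro mult_right_mono) (auto simp: algebra_simps)
    thus "(max (sqrt t - La) 0)^2 * wq g t - 2 * (L - La) * (max (sqrt t - La) 0 * wq g t) \<le> (max (sqrt t - L) 0)^2 * wq g t"
      by (simp add: algebra_simps)
  qed
  finally show ?thesis .
qed

lemma GG_lip:
  assumes "0 \<le> g" "g \<le> 1"
  shows "\<bar>GG g a - GG g b\<bar> \<le> \<bar>a - b\<bar> * integral\<^sup>L lborel (wq g)"
proof -
  have "GG g a - GG g b = integral\<^sup>L lborel (\<lambda>t. max (sqrt t - a) 0 * wq g t - max (sqrt t - b) 0 * wq g t)"
    unfolding GG_def using int_G[OF assms, of a] int_G[OF assms, of b]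
    by (simp add: Bochner_Integration.integral_diff)
  hence "\<bar>GG g a - GG g b\<bar> \<le> integral\<^sup>L lborel (\<lambda>t. \<bar>max (sqrt t - a) 0 * wq g t - max (sqrt t - b) 0 * wq g t\<bar>)"
    by (simp add: integral_abs_bound)
  also have "\<dots> \<le> integral\<^sup>L lborel (\<lambda>t. \<bar>a - b\<bar> * wq g t)"
  proof (rule integral_mono)
    show "integrable lborel (\<lambda>t. \<bar>max (sqrt t - a) 0 * wq g t - max (sqrt t - b) 0 * wq g t\<bar>)"
      using int_G[OF assms, of a] int_G[OF assms, of b] by auto
    show "integrable lborel (\<lambda>t. \<bar>a - b\<bar> * wq g t)" using int_W[OF assms] by auto
    fix t :: real
    have w: "0 \<le> wq g t" using wq_nonneg'[OF assms] .
    have "\<bar>max (sqrt t - a) 0 - max (sqrt t - b) 0\<bar> \<le> \<bar>a - b\<bar>" by (auto simp: max_def)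
    hence "\<bar>max (sqrt t - a) 0 - max (sqrt t - b) 0\<bar> * wq g t \<le> \<bar>a - b\<bar> * wq g t"
      using w by (rule mult_right_mono)
    thus "\<bar>max (sqrt t - a) 0 * wq g t - max (sqrt t - b) 0 * wq g t\<bar> \<le> \<bar>a - b\<bar> * wq g t"
      using w by (simp add: left_diff_distrib[symmetric] abs_mult)
  qed
  also have "\<dots> = \<bar>a - b\<bar> * integral\<^sup>L lborel (wq g)" by simp
  finally show ?thesis .
qed

lemma GG_cont:
  assumes "0 \<le> g" "g \<le> 1"
  shows "continuous_on S (GG g)"
proof (rule lipschitz_on_continuous_on[where L="integral\<^sup>L lborel (wq g)"], rule lipschitz_onI)
  show "0 \<le> integral\<^sup>L lborel (wq g)" using wq_nonneg'[OF assms] by (intro Bochner_Integration.integral_nonneg) auto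
  fix x y assume "x \<in> S" "y \<in> S"
  show "dist (GG g x) (GG g y) \<le> integral\<^sup>L lborel (wq g) * dist x y"
    using GG_lip[OF assms, of x y] by (simp add: dist_real_def mult.commute)
qed

definition KK :: real where "KK = integral\<^sup>L lborel (\<lambda>t::real. indicator {0<..4} t / sqrt t)"

lemma GG_upper:
  assumes g: "0 \<le> g" "g \<le> 1" and L: "0 \<le> L"
  shows "GG g L \<le> sqrt g * KK"
proof -
  have "GG g L \<le> integral\<^sup>L lborel (\<lambda>t. sqrt g * (indicator {0<..4} t / sqrt t))"
    unfolding GG_def
  proof (rule integral_mono)
    show "integrable lborel (\<lambda>t. max (sqrt t - L) 0 * wq g t)" using int_G[OF g] .
    show "integrable lborel (\<lambda>t. sqrt g * (indicator {0<..4} t / sqrt t))"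
      using m_int by (rule integrable_mult_right)
    fix t :: real
    show "max (sqrt t - L) 0 * wq g t \<le> sqrt g * (indicator {0<..4} t / sqrt t)"
    proof (cases "wq g t = 0")
      case True thus ?thesis using g by (simp add: indicator_def)
    next
      case False
      hence Q: "0 < Qg g t" by (rule wq_supp)
      hence t: "0 < t" "t \<le> 4" using Qg_pos_imp[OF g] by auto
      define s where "s = sqrt t"
      have s: "0 < s" "s * s = t" using t unfolding s_def by auto
      have "max 0 (Qg g t) \<le> g * 10"
      proof -
        have "g*(2*t+2) \<le> g*10" using g t by (intro mult_left_mono) auto
        thus ?thesis using Qg_le2[of g t] Q by simp
      qed
      hence "sqrt (max 0 (Qg g t)) \<le> sqrt (g*10)" by (rule real_sqrt_le_mono)
      also have "\<dots> = sqrt g * sqrt 10" by (simp add: real_sqrt_mult)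
      also have "\<dots> \<le> sqrt g * 4"
      proof (rule mult_left_mono)
        have "sqrt 10 \<le> sqrt (16::real)" by (rule real_sqrt_le_mono) simp
        also have "sqrt (16::real) = 4" by (rule real_sqrt_unique) auto
        finally show "sqrt 10 \<le> (4::real)" .
      qed (use g in simp)
      also have "\<dots> \<le> sqrt g * (2*pi)" using pi_ge_two g by (intro mult_left_mono) auto
      finally have X: "sqrt (max 0 (Qg g t)) \<le> sqrt g * (2*pi)" .
      have m: "max (sqrt t - L) 0 \<le> s" using L s unfolding s_def by auto
      have w0: "0 \<le> wq g t" using wq_nonneg'[OF g] .
      have "max (sqrt t - L) 0 * wq g t \<le> s * wq g t"
        using m w0 by (rule mult_right_mono)
      also have "\<dots> = s * sqrt (max 0 (Qg g t)) / (2*pi*(s * s))" unfolding wq_def s(2) by simp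
      also have "\<dots> \<le> s * (sqrt g * (2*pi)) / (2*pi*(s * s))"
        using X s by (intro divide_right_mono mult_left_mono) auto
      also have "\<dots> = sqrt g / s" using s(1) pi_gt_zero by (simp add: field_simps)
      also have "\<dots> = sqrt g * (indicator {0<..4} t / sqrt t)" using t unfolding s_def
        by (simp add: indicator_def)
      finally show ?thesis .
    qed
  qed
  also have "\<dots> = sqrt g * KK" unfolding KK_def by (rule integral_mult_right_zero)
  finally show ?thesis .
qed

lemma GG_lower:
  assumes b: "0 < \<beta>" "\<beta> \<le> 1" and L: "0 \<le> L0" "L0 < 1 + sqrt \<beta>"
  shows "\<exists>\<kappa>>0. \<exists>\<delta>>0. \<forall>g. 0 \<le> g \<and> \<beta> - \<delta> \<le> g \<and> g \<le> \<beta> \<longrightarrow> \<kappa> \<le> GG g L0"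
proof -
  define sb where "sb = 1 + sqrt \<beta>"
  define m where "m = max L0 1"
  have sqb: "0 < sqrt \<beta>" "sqrt \<beta> \<le> 1" using b by auto
  have msb: "m < sb" "1 \<le> m" "L0 \<le> m" using L sqb unfolding m_def sb_def by auto
  define s1 where "s1 = (m + sb)/2"
  define s2 where "s2 = (s1 + sb)/2"
  have ss: "m < s1" "s1 < s2" "s2 < sb" "sb \<le> 2" using msb sqb unfolding s1_def s2_def sb_def by auto
  define a where "a = s1^2"
  define bb where "bb = s2^2"
  have ab: "a < bb" unfolding a_def bb_def using ss msb by (intro power_strict_mono) auto
  have "1 < s1" using ss msb by simp
  hence a1: "1 < a" unfolding a_def by (rule one_less_power) simp
  have bsb: "bb < sb^2" unfolding bb_def using ss msb by (intro power_strict_mono) auto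
  have b4: "bb \<le> 4"
  proof -
    have "sb^2 \<le> 2^2" using ss sqb unfolding sb_def by (intro power_mono) auto
    thus ?thesis using bsb by simp
  qed
  define eta where "eta = (sb^2 - bb) * (a - 1)"
  have eta: "0 < eta" unfolding eta_def using bsb a1 by simp
  define d where "d = s1 - m"
  have d: "0 < d" unfolding d_def using ss by simp
  define c0 where "c0 = d * (sqrt (eta/2) / (2*pi*4))"
  have c0: "0 < c0" unfolding c0_def using d eta by simp
  define \<delta> where "\<delta> = eta / 20"
  have gm1: "gam_minus \<beta> \<le> 1"
  proof -
    have "(1 - sqrt \<beta>)^2 \<le> 1^2" using sqb by (intro power_mono) auto
    thus ?thesis unfolding gam_minus_def by simp
  qed
  have gp: "gam_plus \<beta> = sb^2" unfolding gam_plus_def sb_def by simp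
  show ?thesis
  proof (intro exI conjI allI impI)
    show "0 < c0 * (bb - a)" using c0 ab by simp
    show "0 < \<delta>" unfolding \<delta>_def using eta by simp
    fix g assume g: "0 \<le> g \<and> \<beta> - \<delta> \<le> g \<and> g \<le> \<beta>"
    have g1: "g \<le> 1" using g b by simp
    have "c0 * (bb - a) = integral\<^sup>L lborel (\<lambda>t::real. c0 * indicator {a..bb} t)"
      using ab by simp
    also have "\<dots> \<le> GG g L0" unfolding GG_def
    proof (rule integral_mono)
      show "integrable lborel (\<lambda>t::real. c0 * indicator {a..bb} t)"
        using ab by (intro integrable_mult_right integrable_real_indicator) auto
      show "integrable lborel (\<lambda>t. max (sqrt t - L0) 0 * wq g t)" using int_G g g1 by simp
      fix t :: real
      show "c0 * indicator {a..bb} t \<le> max (sqrt t - L0) 0 * wq g t"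
      proof (cases "t \<in> {a..bb}")
        case False
        thus ?thesis using wq_nonneg'[of g t] g g1 by simp
      next
        case True
        have t: "a \<le> t" "t \<le> bb" using True by auto
        have t0: "0 < t" using t a1 by simp
        have "sqrt a \<le> sqrt t" using t by simp
        moreover have "sqrt a = s1" unfolding a_def using ss msb by simp
        ultimately have "s1 \<le> sqrt t" by simp
        hence mx: "d \<le> max (sqrt t - L0) 0" unfolding d_def using msb by simp
        have "(sb^2 - bb) * (a - 1) \<le> (gam_plus \<beta> - t) * (t - gam_minus \<beta>)"
          using t gm1 gp bsb a1 by (intro mult_mono) auto
        hence Qb: "eta \<le> Qg \<beta> t" using gam_prod[of \<beta> t] b unfolding eta_def by simp
        have "Qg \<beta> t - Qg g t = (\<beta> - g) * (2*t + 2 - \<beta> - g)" unfolding Qg_def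
          by (simp add: power2_eq_square algebra_simps)
        also have "\<dots> \<le> (\<beta> - g) * 10" using g t b4 by (intro mult_left_mono) auto
        also have "\<dots> \<le> \<delta> * 10" using g by simp
        finally have "eta / 2 \<le> Qg g t" using Qb unfolding \<delta>_def by simp
        hence "sqrt (eta/2) \<le> sqrt (max 0 (Qg g t))" by simp
        hence "sqrt (eta/2) / (2*pi*4) \<le> sqrt (max 0 (Qg g t)) / (2*pi*4)" by (simp add: divide_right_mono)
        also have "\<dots> \<le> sqrt (max 0 (Qg g t)) / (2*pi*t)" using t t0 b4
          by (intro divide_left_mono) auto
        finally have w: "sqrt (eta/2) / (2*pi*4) \<le> wq g t" unfolding wq_def .
        have "c0 = d * (sqrt (eta/2) / (2*pi*4))" by (rule c0_def)
        also have "\<dots> \<le> max (sqrt t - L0) 0 * wq g t" using mx w d eta by (intro mult_mono) auto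
        finally show ?thesis using True by simp
      qed
    qed
    finally show "c0 * (bb - a) \<le> GG g L0" .
  qed
qed

definition gg :: "real \<Rightarrow> real \<Rightarrow> real" where
  "gg \<beta> \<rho> = \<beta> * (1 - \<rho>) / (1 - \<beta> * \<rho>)"

definition isroot :: "real \<Rightarrow> real \<Rightarrow> real \<Rightarrow> real \<Rightarrow> bool" where
  "isroot \<alpha> \<beta> \<rho> L \<longleftrightarrow> 0 \<le> L \<and> \<alpha> * (1 - \<beta> * \<rho>) * GG (gg \<beta> \<rho>) L = \<rho> * \<beta> * L"

lemma br_lt1:
  fixes \<rho> \<beta> :: real
  assumes "0 < \<rho>" "\<rho> < 1" "0 < \<beta>" "\<beta> \<le> 1"
  shows "\<beta> * \<rho> < 1"
proof -
  have "\<beta> * \<rho> \<le> \<rho>" using assms by (intro mult_left_le_one_le) auto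
  thus ?thesis using assms(2) by linarith
qed

lemma MPgamma_eq:
  assumes "0 < \<rho>" "\<rho> < 1" "0 < \<beta>" "\<beta> \<le> 1"
  shows "MPgamma \<rho> (\<beta> * \<rho>) = gg \<beta> \<rho>"
proof -
  have "\<beta> * \<rho> < 1" using br_lt1[OF assms] .
  hence "\<rho> - \<rho> * (\<beta> * \<rho>) \<noteq> 0" using assms by (simp add: right_diff_distrib[symmetric])
  have "MPgamma \<rho> (\<beta> * \<rho>) = (\<rho> * (\<beta> * (1 - \<rho>))) / (\<rho> * (1 - \<beta> * \<rho>))"
    unfolding MPgamma_def by (simp add: algebra_simps)
  also have "\<dots> = gg \<beta> \<rho>" unfolding gg_def using assms by simp
  finally show ?thesis .
qed

lemma gg_bounds:
  assumes "0 < \<rho>" "\<rho> < 1" "0 < \<beta>" "\<beta> \<le> 1"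
  shows "0 < gg \<beta> \<rho>" "gg \<beta> \<rho> \<le> \<beta>" "gg \<beta> \<rho> \<le> 1"
proof -
  have d: "0 < 1 - \<beta> * \<rho>" using br_lt1[OF assms] by simp
  show "0 < gg \<beta> \<rho>" unfolding gg_def using assms d by simp
  have "1 - \<rho> \<le> 1 - \<beta> * \<rho>" using assms by (simp add: mult_left_le_one_le)
  hence "\<beta> * (1 - \<rho>) \<le> \<beta> * (1 - \<beta> * \<rho>)" using assms by (intro mult_left_mono) auto
  thus "gg \<beta> \<rho> \<le> \<beta>" unfolding gg_def using d by (simp add: divide_le_eq)
  thus "gg \<beta> \<rho> \<le> 1" using assms by simp
qed

lemma gg_anti:
  assumes "0 < \<rho>1" "\<rho>1 < \<rho>2" "\<rho>2 < 1" "0 < \<beta>" "\<beta> \<le> 1"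
  shows "gg \<beta> \<rho>2 \<le> gg \<beta> \<rho>1"
proof -
  have d1: "0 < 1 - \<beta> * \<rho>1" using br_lt1[of \<rho>1 \<beta>] assms by simp
  have d2: "0 < 1 - \<beta> * \<rho>2" using br_lt1[of \<rho>2 \<beta>] assms by simp
  have "(1 - \<beta>) * \<rho>1 \<le> (1 - \<beta>) * \<rho>2" using assms by (intro mult_left_mono) auto
  hence "(1 - \<rho>2) * (1 - \<beta> * \<rho>1) \<le> (1 - \<rho>1) * (1 - \<beta> * \<rho>2)" by (simp add: algebra_simps)
  hence "\<beta> * ((1 - \<rho>2) * (1 - \<beta> * \<rho>1)) \<le> \<beta> * ((1 - \<rho>1) * (1 - \<beta> * \<rho>2))"
    using assms by (intro mult_left_mono) auto
  thus ?thesis unfolding gg_def using d1 d2 by (simp add: divide_simps algebra_simps)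
qed

lemma root_min:
  assumes g: "0 < g" "g \<le> 1" and a: "0 < a" and r: "0 < r"
    and root: "a * GG g La = r * La"
  shows "r * La^2 + a * HH g La + r * (L - La)^2 \<le> r * L^2 + a * HH g L"
proof -
  have "HH g La - 2 * (L - La) * GG g La \<le> HH g L" using HH_conv g by simp
  hence "a * (HH g La - 2 * (L - La) * GG g La) \<le> a * HH g L" using a by (intro mult_left_mono) auto
  moreover have "a * (HH g La - 2 * (L - La) * GG g La) = a * HH g La - 2 * (L - La) * (a * GG g La)"
    by (simp add: algebra_simps)
  ultimately have "a * HH g La - 2 * (L - La) * (r * La) \<le> a * HH g L" using root by simp
  moreover have "r * L^2 - 2 * (L - La) * (r * La) = r * La^2 + r * (L - La)^2"
    by (simp add: power2_eq_square algebra_simps)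
  ultimately show ?thesis by linarith
qed

lemma root_exists:
  assumes g: "0 < g" "g \<le> 1" and a: "0 < a" and r: "0 < r"
  shows "\<exists>La. 0 \<le> La \<and> La \<le> 2 \<and> a * GG g La = r * La"
proof -
  let ?f = "\<lambda>L. a * GG g L - r * L"
  have c: "continuous_on {0..2} ?f"
    using GG_cont[OF less_imp_le[OF g(1)] g(2)] by (intro continuous_intros) auto
  have "sqrt g \<le> 1" using g by simp
  hence "GG g 2 = 0" using GG_zero[OF g] by simp
  hence f2: "?f 2 \<le> 0" using r by simp
  have f0: "0 \<le> ?f 0" using GG_nonneg[of g 0] g a by simp
  obtain x where "0 \<le> x" "x \<le> 2" "?f x = 0" using IVT2'[of ?f 2 0 0, OF f2 f0 _ c] by auto
  thus ?thesis by auto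
qed

lemma Mfun_eq:
  assumes "0 < \<rho>" "\<rho> < 1" "0 < \<beta>" "\<beta> \<le> 1" "0 \<le> L"
  shows "Mfun L \<rho> (\<beta> * \<rho>) \<alpha> = \<rho> + \<beta> * \<rho> - \<rho> * (\<beta> * \<rho>) +
     (1 - \<beta> * \<rho>) * (\<rho> * L^2 + (\<alpha> * (1 - \<beta> * \<rho>) / \<beta>) * HH (gg \<beta> \<rho>) L)"
proof -
  have g: "0 < gg \<beta> \<rho>" "gg \<beta> \<rho> \<le> 1" using gg_bounds[OF assms(1-4)] by auto
  have d: "0 < 1 - \<beta> * \<rho>" using br_lt1[OF assms(1-4)] by simp
  have "\<alpha> * (1 - \<rho>) * (HH (gg \<beta> \<rho>) L / gg \<beta> \<rho>) = (\<alpha> * (1 - \<beta> * \<rho>) / \<beta>) * HH (gg \<beta> \<rho>) L"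
    unfolding gg_def using assms d by (simp add: field_simps)
  thus ?thesis unfolding Mfun_def Let_def MPgamma_eq[OF assms(1-4)] lemB[OF g assms(5)] by simp
qed

lemma isroot_iff:
  assumes "0 < \<beta>"
  shows "isroot \<alpha> \<beta> \<rho> L \<longleftrightarrow> 0 \<le> L \<and> (\<alpha> * (1 - \<beta> * \<rho>) / \<beta>) * GG (gg \<beta> \<rho>) L = \<rho> * L"
  unfolding isroot_def using assms by (auto simp: field_simps)

lemma root_minM:
  assumes "0 < \<alpha>" "0 < \<rho>" "\<rho> < 1" "0 < \<beta>" "\<beta> \<le> 1" "isroot \<alpha> \<beta> \<rho> La" "0 \<le> L"
  shows "Mfun La \<rho> (\<beta> * \<rho>) \<alpha> + (1 - \<beta> * \<rho>) * (\<rho> * (L - La)^2) \<le> Mfun L \<rho> (\<beta> * \<rho>) \<alpha>"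
proof -
  have g: "0 < gg \<beta> \<rho>" "gg \<beta> \<rho> \<le> 1" using gg_bounds[OF assms(2-5)] by auto
  have d: "0 < 1 - \<beta> * \<rho>" using br_lt1[OF assms(2-5)] by simp
  have a: "0 < \<alpha> * (1 - \<beta> * \<rho>) / \<beta>" using assms d by simp
  have r: "0 \<le> La" "(\<alpha> * (1 - \<beta> * \<rho>) / \<beta>) * GG (gg \<beta> \<rho>) La = \<rho> * La"
    using assms(6) isroot_iff[OF assms(4)] by auto
  have "\<rho> * La^2 + (\<alpha> * (1 - \<beta> * \<rho>) / \<beta>) * HH (gg \<beta> \<rho>) La + \<rho> * (L - La)^2
      \<le> \<rho> * L^2 + (\<alpha> * (1 - \<beta> * \<rho>) / \<beta>) * HH (gg \<beta> \<rho>) L"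
    by (rule root_min[OF g a assms(2) r(2)])
  hence "(1 - \<beta> * \<rho>) * (\<rho> * La^2 + (\<alpha> * (1 - \<beta> * \<rho>) / \<beta>) * HH (gg \<beta> \<rho>) La + \<rho> * (L - La)^2)
      \<le> (1 - \<beta> * \<rho>) * (\<rho> * L^2 + (\<alpha> * (1 - \<beta> * \<rho>) / \<beta>) * HH (gg \<beta> \<rho>) L)"
    using d by (intro mult_left_mono) auto
  thus ?thesis using Mfun_eq[OF assms(2-5) r(1), of \<alpha>] Mfun_eq[OF assms(2-5) assms(7), of \<alpha>]
    by (simp add: algebra_simps)
qed

lemma per_rho:
  assumes al: "0 < \<alpha>" and b: "0 < \<beta>" "\<beta> \<le> 1" and r: "0 < \<rho>" "\<rho> < 1"
  shows "isroot \<alpha> \<beta> \<rho> (Lstar \<rho> \<beta> \<alpha>)"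
    and "\<And>L. isroot \<alpha> \<beta> \<rho> L \<Longrightarrow> L = Lstar \<rho> \<beta> \<alpha>"
    and "\<exists>!La. 0 \<le> La \<and> (\<forall>L\<ge>0. Mfun La \<rho> (\<beta> * \<rho>) \<alpha> \<le> Mfun L \<rho> (\<beta> * \<rho>) \<alpha>)"
proof -
  have g: "0 < gg \<beta> \<rho>" "gg \<beta> \<rho> \<le> 1" using gg_bounds[OF r b] by auto
  have d: "0 < 1 - \<beta> * \<rho>" using br_lt1[OF r b] by simp
  have a: "0 < \<alpha> * (1 - \<beta> * \<rho>) / \<beta>" using al b d by simp
  obtain r0 where r0: "0 \<le> r0" "(\<alpha> * (1 - \<beta> * \<rho>) / \<beta>) * GG (gg \<beta> \<rho>) r0 = \<rho> * r0"
    using root_exists[OF g a r(1)] by auto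
  have R0: "isroot \<alpha> \<beta> \<rho> r0" using r0 isroot_iff[OF b(1)] by auto
  define P where "P = (\<lambda>La. 0 \<le> La \<and> (\<forall>L\<ge>0. Mfun La \<rho> (\<beta> * \<rho>) \<alpha> \<le> Mfun L \<rho> (\<beta> * \<rho>) \<alpha>))"
  have Proot: "P La" if "isroot \<alpha> \<beta> \<rho> La" for La
  proof -
    have "0 \<le> La" using that unfolding isroot_def by simp
    moreover have "Mfun La \<rho> (\<beta> * \<rho>) \<alpha> \<le> Mfun L \<rho> (\<beta> * \<rho>) \<alpha>" if "0 \<le> L" for L
    proof -
      have "0 \<le> (1 - \<beta> * \<rho>) * (\<rho> * (L - La)^2)" using d r by simp
      thus ?thesis using root_minM[OF al r b \<open>isroot \<alpha> \<beta> \<rho> La\<close> that] by linarith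
    qed
    ultimately show ?thesis unfolding P_def by auto
  qed
  have uniq: "La = r0" if "P La" for La
  proof -
    have "0 \<le> La" "Mfun La \<rho> (\<beta> * \<rho>) \<alpha> \<le> Mfun r0 \<rho> (\<beta> * \<rho>) \<alpha>" using that r0 unfolding P_def by auto
    hence "(1 - \<beta> * \<rho>) * (\<rho> * (La - r0)^2) \<le> 0" using root_minM[OF al r b R0, of La] by linarith
    moreover have "0 \<le> (1 - \<beta> * \<rho>) * (\<rho> * (La - r0)^2)" using d r by simp
    ultimately have "(1 - \<beta> * \<rho>) * (\<rho> * (La - r0)^2) = 0" by linarith
    hence "(La - r0)^2 = 0" using d r by (simp add: mult_eq_0_iff)
    thus ?thesis by simp
  qed
  have Ls: "Lstar \<rho> \<beta> \<alpha> = r0"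
  proof -
    have "Lstar \<rho> \<beta> \<alpha> = (THE La. P La)" unfolding Lstar_def P_def using r by simp
    also have "\<dots> = r0" using Proot[OF R0] uniq by (rule the_equality)
    finally show ?thesis .
  qed
  show "isroot \<alpha> \<beta> \<rho> (Lstar \<rho> \<beta> \<alpha>)" using R0 Ls by simp
  show "\<And>L. isroot \<alpha> \<beta> \<rho> L \<Longrightarrow> L = Lstar \<rho> \<beta> \<alpha>" using Proot uniq Ls by auto
  show "\<exists>!La. 0 \<le> La \<and> (\<forall>L\<ge>0. Mfun La \<rho> (\<beta> * \<rho>) \<alpha> \<le> Mfun L \<rho> (\<beta> * \<rho>) \<alpha>)"
  proof (rule ex1I[where a=r0])
    show "0 \<le> r0 \<and> (\<forall>L\<ge>0. Mfun r0 \<rho> (\<beta> * \<rho>) \<alpha> \<le> Mfun L \<rho> (\<beta> * \<rho>) \<alpha>)"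
      using Proot[OF R0] unfolding P_def .
    fix La assume "0 \<le> La \<and> (\<forall>L\<ge>0. Mfun La \<rho> (\<beta> * \<rho>) \<alpha> \<le> Mfun L \<rho> (\<beta> * \<rho>) \<alpha>)"
    thus "La = r0" using uniq unfolding P_def by simp
  qed
qed

lemma root_le:
  assumes "0 < \<alpha>" "0 < \<beta>" "\<beta> \<le> 1" "0 < \<rho>" "\<rho> < 1" "isroot \<alpha> \<beta> \<rho> L"
  shows "L \<le> 1 + sqrt \<beta>"
proof (rule ccontr)
  assume "\<not> ?thesis"
  hence L: "1 + sqrt \<beta> < L" by simp
  have g: "0 < gg \<beta> \<rho>" "gg \<beta> \<rho> \<le> \<beta>" "gg \<beta> \<rho> \<le> 1" using gg_bounds[OF assms(4,5,2,3)] by auto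
  have "sqrt (gg \<beta> \<rho>) \<le> sqrt \<beta>" using g by simp
  hence "1 + sqrt (gg \<beta> \<rho>) \<le> L" using L by linarith
  hence "GG (gg \<beta> \<rho>) L = 0" using GG_zero[OF g(1,3)] by simp
  hence "\<rho> * \<beta> * L = 0" using assms(6) unfolding isroot_def by simp
  moreover have "0 \<le> sqrt \<beta>" using assms(2) by simp
  hence "0 < L" using L by linarith
  ultimately show False using assms by simp
qed

lemma root_mono:
  assumes al: "0 < \<alpha>" and b: "0 < \<beta>" "\<beta> \<le> 1" and r: "0 < \<rho>1" "\<rho>1 < \<rho>2" "\<rho>2 < 1"
    and R1: "isroot \<alpha> \<beta> \<rho>1 r1" and R2: "isroot \<alpha> \<beta> \<rho>2 r2"
  shows "r2 \<le> r1"
proof (rule ccontr)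
  assume "\<not> ?thesis"
  hence lt: "r1 < r2" by simp
  have g1: "0 < gg \<beta> \<rho>1" "gg \<beta> \<rho>1 \<le> 1" using gg_bounds[of \<rho>1 \<beta>] r b by auto
  have g2: "0 < gg \<beta> \<rho>2" "gg \<beta> \<rho>2 \<le> 1" using gg_bounds[of \<rho>2 \<beta>] r b by auto
  have g21: "gg \<beta> \<rho>2 \<le> gg \<beta> \<rho>1" using gg_anti[OF r b] .
  define A1 where "A1 = \<alpha> * (1 - \<beta> * \<rho>1)"
  define A2 where "A2 = \<alpha> * (1 - \<beta> * \<rho>2)"
  have A: "0 < A1" "0 < A2" unfolding A1_def A2_def using al br_lt1[of \<rho>1 \<beta>] br_lt1[of \<rho>2 \<beta>] r b by auto
  have r1: "0 \<le> r1" using R1 unfolding isroot_def by simp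
  have e1: "A1 * GG (gg \<beta> \<rho>1) r1 = \<rho>1 * \<beta> * r1" using R1 unfolding isroot_def A1_def by simp
  have e2: "A2 * GG (gg \<beta> \<rho>2) r2 = \<rho>2 * \<beta> * r2" using R2 unfolding isroot_def A2_def by simp
  have "GG (gg \<beta> \<rho>2) r2 \<le> GG (gg \<beta> \<rho>2) r1" using GG_anti[of "gg \<beta> \<rho>2" r1 r2] g2 lt by simp
  also have "\<dots> \<le> GG (gg \<beta> \<rho>1) r1" using GG_mono_g[of "gg \<beta> \<rho>2" "gg \<beta> \<rho>1" r1] g1 g2 g21 by simp
  finally have G: "GG (gg \<beta> \<rho>2) r2 \<le> GG (gg \<beta> \<rho>1) r1" .
  have "A1 * (\<rho>2 * \<beta> * r2) = A1 * A2 * GG (gg \<beta> \<rho>2) r2" using e2 by simp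
  also have "\<dots> \<le> A1 * A2 * GG (gg \<beta> \<rho>1) r1" using G A by (intro mult_left_mono) auto
  also have "\<dots> = A2 * (\<rho>1 * \<beta> * r1)" using e1 by (simp add: algebra_simps)
  finally have ineq: "\<beta> * (A1 * \<rho>2 * r2) \<le> \<beta> * (A2 * \<rho>1 * r1)" by (simp add: algebra_simps)
  have "A1 * \<rho>2 - A2 * \<rho>1 = \<alpha> * (\<rho>2 - \<rho>1)" unfolding A1_def A2_def by (simp add: algebra_simps)
  moreover have "0 < \<alpha> * (\<rho>2 - \<rho>1)" using al r by simp
  ultimately have k: "A2 * \<rho>1 < A1 * \<rho>2" by linarith
  have "A2 * \<rho>1 * r1 \<le> A1 * \<rho>2 * r1" using k r1 by (intro mult_right_mono) auto
  also have "\<dots> < A1 * \<rho>2 * r2" using A r lt by simp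
  finally have "\<beta> * (A2 * \<rho>1 * r1) < \<beta> * (A1 * \<rho>2 * r2)" using b by simp
  thus False using ineq by simp
qed

lemma Lstar_bounds:
  assumes al: "0 < \<alpha>" and b: "0 < \<beta>" "\<beta> \<le> 1" and r: "0 \<le> \<rho>" "\<rho> \<le> 1"
  shows "0 \<le> Lstar \<rho> \<beta> \<alpha>" "Lstar \<rho> \<beta> \<alpha> \<le> 1 + sqrt \<beta>"
proof -
  have "0 \<le> Lstar \<rho> \<beta> \<alpha> \<and> Lstar \<rho> \<beta> \<alpha> \<le> 1 + sqrt \<beta>"
  proof (cases "\<rho> = 0 \<or> \<rho> = 1")
    case True thus ?thesis using b unfolding Lstar_def by auto
  next
    case False
    hence r': "0 < \<rho>" "\<rho> < 1" using r by auto
    have R: "isroot \<alpha> \<beta> \<rho> (Lstar \<rho> \<beta> \<alpha>)" by (rule per_rho(1)[OF al b r'])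
    thus ?thesis using root_le[OF al b r' R] unfolding isroot_def by simp
  qed
  thus "0 \<le> Lstar \<rho> \<beta> \<alpha>" "Lstar \<rho> \<beta> \<alpha> \<le> 1 + sqrt \<beta>" by auto
qed

lemma Lstar_mono:
  assumes al: "0 < \<alpha>" and b: "0 < \<beta>" "\<beta> \<le> 1" and r: "0 \<le> \<rho>1" "\<rho>1 \<le> \<rho>2" "\<rho>2 \<le> 1"
  shows "Lstar \<rho>2 \<beta> \<alpha> \<le> Lstar \<rho>1 \<beta> \<alpha>"
proof (cases "\<rho>1 = \<rho>2")
  case True thus ?thesis by simp
next
  case False
  hence lt: "\<rho>1 < \<rho>2" using r by simp
  show ?thesis
  proof (cases "\<rho>2 = 1")
    case True
    have "Lstar 1 \<beta> \<alpha> = 0" unfolding Lstar_def by simp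
    thus ?thesis using Lstar_bounds(1)[OF al b r(1)] r True by simp
  next
    case n1: False
    show ?thesis
    proof (cases "\<rho>1 = 0")
      case True
      have "Lstar \<rho>2 \<beta> \<alpha> \<le> 1 + sqrt \<beta>" using Lstar_bounds(2)[OF al b] r by simp
      moreover have "Lstar 0 \<beta> \<alpha> = 1 + sqrt \<beta>" unfolding Lstar_def by simp
      ultimately show ?thesis using True by simp
    next
      case False
      have r': "0 < \<rho>1" "\<rho>1 < \<rho>2" "\<rho>2 < 1" using False r lt n1 by auto
      show ?thesis
        by (rule root_mono[OF al b r' per_rho(1)[OF al b, of \<rho>1] per_rho(1)[OF al b, of \<rho>2]])
           (use r' in auto)
    qed
  qed
qed

lemma lim0:
  assumes al: "0 < \<alpha>" and b: "0 < \<beta>" "\<beta> \<le> 1"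
  shows "((\<lambda>\<rho>. Lstar \<rho> \<beta> \<alpha>) \<longlongrightarrow> 1 + sqrt \<beta>) (at_right 0)"
proof (rule order_tendstoI)
  have ev: "eventually (\<lambda>\<rho>. \<rho> \<in> {0<..<1}) (at_right (0::real))" by (rule eventually_at_right_real) simp
  fix a assume a: "1 + sqrt \<beta> < a"
  show "eventually (\<lambda>\<rho>. Lstar \<rho> \<beta> \<alpha> < a) (at_right 0)"
    using ev
  proof (rule eventually_mono)
    fix \<rho> :: real assume "\<rho> \<in> {0<..<1}"
    thus "Lstar \<rho> \<beta> \<alpha> < a" using Lstar_bounds(2)[OF al b, of \<rho>] a by simp
  qed
next
  have ev: "eventually (\<lambda>\<rho>. \<rho> \<in> {0<..<1}) (at_right (0::real))" by (rule eventually_at_right_real) simp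
  fix a assume a: "a < 1 + sqrt \<beta>"
  show "eventually (\<lambda>\<rho>. a < Lstar \<rho> \<beta> \<alpha>) (at_right 0)"
  proof (cases "a < 0")
    case True
    show ?thesis using ev
    proof (rule eventually_mono)
      fix \<rho> :: real assume "\<rho> \<in> {0<..<1}"
      thus "a < Lstar \<rho> \<beta> \<alpha>" using Lstar_bounds(1)[OF al b, of \<rho>] True by simp
    qed
  next
    case False
    hence a0: "0 \<le> a" by simp
    obtain \<kappa> \<delta> where k: "0 < \<kappa>" "0 < \<delta>"
      and kl: "\<And>g. 0 \<le> g \<and> \<beta> - \<delta> \<le> g \<and> g \<le> \<beta> \<Longrightarrow> \<kappa> \<le> GG g a"
      using GG_lower[OF b a0 a] by blast
    have t1: "((\<lambda>\<rho>. gg \<beta> \<rho>) \<longlongrightarrow> \<beta> * (1 - 0) / (1 - \<beta> * 0)) (at_right 0)"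
      unfolding gg_def by (intro tendsto_intros) auto
    have ev1: "eventually (\<lambda>\<rho>. \<beta> - \<delta> < gg \<beta> \<rho>) (at_right 0)"
      using t1 k by (intro order_tendstoD(1)) auto
    have t2: "((\<lambda>\<rho>. \<rho> * \<beta> * (1 + sqrt \<beta>) - \<alpha> * (1 - \<beta> * \<rho>) * \<kappa>)
        \<longlongrightarrow> 0 * \<beta> * (1 + sqrt \<beta>) - \<alpha> * (1 - \<beta> * 0) * \<kappa>) (at_right 0)"
      by (intro tendsto_intros)
    have ev2: "eventually (\<lambda>\<rho>. \<rho> * \<beta> * (1 + sqrt \<beta>) - \<alpha> * (1 - \<beta> * \<rho>) * \<kappa> < 0) (at_right 0)"
      using t2 k al by (intro order_tendstoD(2)) auto
    show ?thesis using ev ev1 ev2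
    proof eventually_elim
      case (elim \<rho>)
      hence r: "0 < \<rho>" "\<rho> < 1" by auto
      have g: "0 < gg \<beta> \<rho>" "gg \<beta> \<rho> \<le> \<beta>" "gg \<beta> \<rho> \<le> 1" using gg_bounds[OF r b] by auto
      have d: "0 < 1 - \<beta> * \<rho>" using br_lt1[OF r b] by simp
      define L where "L = Lstar \<rho> \<beta> \<alpha>"
      have R: "isroot \<alpha> \<beta> \<rho> L" unfolding L_def by (rule per_rho(1)[OF al b r])
      have Lsb: "L \<le> 1 + sqrt \<beta>" using root_le[OF al b r R] .
      show "a < Lstar \<rho> \<beta> \<alpha>"
      proof (rule ccontr)
        assume "\<not> ?thesis"
        hence La: "L \<le> a" unfolding L_def by simp
        have "\<kappa> \<le> GG (gg \<beta> \<rho>) a" using kl[of "gg \<beta> \<rho>"] g elim by auto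
        also have "\<dots> \<le> GG (gg \<beta> \<rho>) L" using GG_anti[of "gg \<beta> \<rho>" L a] g La by simp
        finally have "\<alpha> * (1 - \<beta> * \<rho>) * \<kappa> \<le> \<alpha> * (1 - \<beta> * \<rho>) * GG (gg \<beta> \<rho>) L"
          using al d by (intro mult_left_mono) auto
        also have "\<dots> = \<rho> * \<beta> * L" using R unfolding isroot_def by simp
        also have "\<dots> \<le> \<rho> * \<beta> * (1 + sqrt \<beta>)" using Lsb r b by (intro mult_left_mono) auto
        finally show False using elim by simp
      qed
    qed
  qed
qed

lemma lim1:
  assumes al: "0 < \<alpha>" and b: "0 < \<beta>" "\<beta> \<le> 1"
  shows "((\<lambda>\<rho>. Lstar \<rho> \<beta> \<alpha>) \<longlongrightarrow> 0) (at_left 1)"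
proof (rule order_tendstoI)
  have ev: "eventually (\<lambda>\<rho>. \<rho> \<in> {0<..<1}) (at_left (1::real))" by (rule eventually_at_left_real) simp
  fix a :: real assume a: "a < 0"
  show "eventually (\<lambda>\<rho>. a < Lstar \<rho> \<beta> \<alpha>) (at_left 1)"
    using ev
  proof (rule eventually_mono)
    fix \<rho> :: real assume "\<rho> \<in> {0<..<1}"
    thus "a < Lstar \<rho> \<beta> \<alpha>" using Lstar_bounds(1)[OF al b, of \<rho>] a by simp
  qed
next
  have ev: "eventually (\<lambda>\<rho>. \<rho> \<in> {0<..<1}) (at_left (1::real))" by (rule eventually_at_left_real) simp
  fix a :: real assume a: "0 < a"
  have t: "((\<lambda>\<rho>. \<alpha>^2 * (1 - \<beta> * \<rho>) * (\<beta> * (1 - \<rho>)) * KK^2 - (\<rho> * \<beta> * a)^2)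
      \<longlongrightarrow> \<alpha>^2 * (1 - \<beta> * 1) * (\<beta> * (1 - 1)) * KK^2 - (1 * \<beta> * a)^2) (at_left 1)"
    by (intro tendsto_intros)
  have ev2: "eventually (\<lambda>\<rho>. \<alpha>^2 * (1 - \<beta> * \<rho>) * (\<beta> * (1 - \<rho>)) * KK^2 - (\<rho> * \<beta> * a)^2 < 0) (at_left 1)"
    using t a b by (intro order_tendstoD(2)) auto
  show "eventually (\<lambda>\<rho>. Lstar \<rho> \<beta> \<alpha> < a) (at_left 1)"
    using ev ev2
  proof eventually_elim
    case (elim \<rho>)
    hence r: "0 < \<rho>" "\<rho> < 1" by auto
    have g: "0 < gg \<beta> \<rho>" "gg \<beta> \<rho> \<le> \<beta>" "gg \<beta> \<rho> \<le> 1" using gg_bounds[OF r b] by auto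
    have d: "0 < 1 - \<beta> * \<rho>" using br_lt1[OF r b] by simp
    define L where "L = Lstar \<rho> \<beta> \<alpha>"
    have R: "isroot \<alpha> \<beta> \<rho> L" unfolding L_def by (rule per_rho(1)[OF al b r])
    have L0: "0 \<le> L" using R unfolding isroot_def by simp
    have "\<rho> * \<beta> * L = \<alpha> * (1 - \<beta> * \<rho>) * GG (gg \<beta> \<rho>) L" using R unfolding isroot_def by simp
    also have "\<dots> \<le> \<alpha> * (1 - \<beta> * \<rho>) * (sqrt (gg \<beta> \<rho>) * KK)"
      using GG_upper[of "gg \<beta> \<rho>" L] g L0 al d by (intro mult_left_mono) auto
    finally have i1: "\<rho> * \<beta> * L \<le> \<alpha> * (1 - \<beta> * \<rho>) * (sqrt (gg \<beta> \<rho>) * KK)" .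
    have nn: "0 \<le> \<rho> * \<beta> * L" using r b L0 by simp
    have "(\<rho> * \<beta> * L)^2 \<le> (\<alpha> * (1 - \<beta> * \<rho>) * (sqrt (gg \<beta> \<rho>) * KK))^2"
      using i1 nn by (intro power_mono) auto
    also have "\<dots> = \<alpha>^2 * (1 - \<beta> * \<rho>)^2 * (sqrt (gg \<beta> \<rho>))^2 * KK^2"
      by (simp add: power_mult_distrib)
    also have "\<dots> = \<alpha>^2 * (1 - \<beta> * \<rho>)^2 * gg \<beta> \<rho> * KK^2"
      using g by simp
    also have "\<dots> = \<alpha>^2 * (1 - \<beta> * \<rho>) * (\<beta> * (1 - \<rho>)) * KK^2"
      using d unfolding gg_def by (simp add: power2_eq_square field_simps)
    also have "\<dots> < (\<rho> * \<beta> * a)^2" using elim by simp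
    finally have "(\<rho> * \<beta> * L)^2 < (\<rho> * \<beta> * a)^2" .
    hence "\<rho> * \<beta> * L < \<rho> * \<beta> * a"
      by (rule power_less_imp_less_base) (use r b a in simp)
    hence "L < a" using r b by simp
    thus "Lstar \<rho> \<beta> \<alpha> < a" unfolding L_def .
  qed
qed

lemma eq_alg:
  fixes G L \<alpha> \<beta> \<rho> :: real
  assumes "0 < \<alpha>" "0 < \<beta>" "0 < \<rho>" "\<rho> < 1" "\<beta> * \<rho> < 1"
  shows "(G / (\<beta> * (1 - \<rho>) / (1 - \<beta> * \<rho>)) = L * \<rho> / (\<alpha> * (1 - \<rho>))) \<longleftrightarrow> \<alpha> * (1 - \<beta> * \<rho>) * G = \<rho> * \<beta> * L"
proof -
  have n: "1 - \<beta> * \<rho> \<noteq> 0" "1 - \<rho> \<noteq> 0" "\<alpha> \<noteq> 0" "\<beta> \<noteq> 0" using assms by auto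
  have "(G / (\<beta> * (1 - \<rho>) / (1 - \<beta> * \<rho>)) = L * \<rho> / (\<alpha> * (1 - \<rho>)))
     \<longleftrightarrow> (1 - \<rho>) * (\<alpha> * (1 - \<beta> * \<rho>) * G) = (1 - \<rho>) * (\<rho> * \<beta> * L)"
    using n by (simp add: field_simps)
  also have "\<dots> \<longleftrightarrow> \<alpha> * (1 - \<beta> * \<rho>) * G = \<rho> * \<beta> * L" using n by simp
  finally show ?thesis .
qed

lemma eq_iff_root:
  assumes al: "0 < \<alpha>" and b: "0 < \<beta>" "\<beta> \<le> 1" and r: "0 < \<rho>" "\<rho> < 1" and L: "0 \<le> La"
  shows "(MP_P (MPgamma \<rho> (\<beta> * \<rho>)) (La^2) (1/2) - La * MP_P (MPgamma \<rho> (\<beta> * \<rho>)) (La^2) 0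
           = La * \<rho> / (\<alpha> * (1 - \<rho>))) \<longleftrightarrow> isroot \<alpha> \<beta> \<rho> La"
proof -
  have g: "0 < gg \<beta> \<rho>" "gg \<beta> \<rho> \<le> 1" using gg_bounds[OF r b] by auto
  have d: "0 < 1 - \<beta> * \<rho>" using br_lt1[OF r b] by simp
  have "MP_P (MPgamma \<rho> (\<beta> * \<rho>)) (La^2) (1/2) - La * MP_P (MPgamma \<rho> (\<beta> * \<rho>)) (La^2) 0
      = GG (gg \<beta> \<rho>) La / gg \<beta> \<rho>"
    unfolding MPgamma_eq[OF r b] by (rule lemA[OF g L])
  moreover have "(GG (gg \<beta> \<rho>) La / gg \<beta> \<rho> = La * \<rho> / (\<alpha> * (1 - \<rho>)))
      \<longleftrightarrow> \<alpha> * (1 - \<beta> * \<rho>) * GG (gg \<beta> \<rho>) La = \<rho> * \<beta> * La"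
    unfolding gg_def[of \<beta> \<rho>] by (rule eq_alg) (use al b r d in auto)
  ultimately show ?thesis unfolding isroot_def using L by simp
qed

theorem theorem4:
  fixes \<alpha> \<beta> :: real
  assumes "\<alpha> = 1/2 \<or> \<alpha> = 1"
    and "0 < \<beta>" and "\<beta> \<le> 1"
  shows "(\<forall>\<rho>1 \<rho>2. 0 \<le> \<rho>1 \<and> \<rho>1 \<le> \<rho>2 \<and> \<rho>2 \<le> 1 \<longrightarrow> Lstar \<rho>2 \<beta> \<alpha> \<le> Lstar \<rho>1 \<beta> \<alpha>)
    \<and> ((\<lambda>\<rho>. Lstar \<rho> \<beta> \<alpha>) \<longlongrightarrow> 1 + sqrt \<beta>) (at_right 0)
    \<and> Lstar 0 \<beta> \<alpha> = 1 + sqrt \<beta>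
    \<and> ((\<lambda>\<rho>. Lstar \<rho> \<beta> \<alpha>) \<longlongrightarrow> 0) (at_left 1)
    \<and> Lstar 1 \<beta> \<alpha> = 0
    \<and> (\<forall>\<rho>. 0 < \<rho> \<and> \<rho> < 1 \<longrightarrow>
         (\<exists>!\<Lambda>. 0 \<le> \<Lambda> \<and> (\<forall>L\<ge>0. Mfun \<Lambda> \<rho> (\<beta> * \<rho>) \<alpha> \<le> Mfun L \<rho> (\<beta> * \<rho>) \<alpha>))
       \<and> (let \<gamma> = MPgamma \<rho> (\<beta> * \<rho>) in
           (\<forall>\<Lambda>\<ge>0. (MP_P \<gamma> (\<Lambda>^2) (1/2) - \<Lambda> * MP_P \<gamma> (\<Lambda>^2) 0 = \<Lambda> * \<rho> / (\<alpha> * (1 - \<rho>)))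
                     \<longleftrightarrow> \<Lambda> = Lstar \<rho> \<beta> \<alpha>)
         \<and> (\<forall>\<Lambda>1 \<Lambda>2. 0 \<le> \<Lambda>1 \<and> \<Lambda>1 \<le> \<Lambda>2 \<longrightarrow>
               MP_P \<gamma> (\<Lambda>2^2) (1/2) - \<Lambda>2 * MP_P \<gamma> (\<Lambda>2^2) 0
             \<le> MP_P \<gamma> (\<Lambda>1^2) (1/2) - \<Lambda>1 * MP_P \<gamma> (\<Lambda>1^2) 0)))"
proof -
  have al: "0 < \<alpha>" using assms(1) by auto
  have b: "0 < \<beta>" "\<beta> \<le> 1" using assms(2,3) by auto
  have P6: "(\<exists>!\<Lambda>. 0 \<le> \<Lambda> \<and> (\<forall>L\<ge>0. Mfun \<Lambda> \<rho> (\<beta> * \<rho>) \<alpha> \<le> Mfun L \<rho> (\<beta> * \<rho>) \<alpha>))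
       \<and> (let \<gamma> = MPgamma \<rho> (\<beta> * \<rho>) in
           (\<forall>\<Lambda>\<ge>0. (MP_P \<gamma> (\<Lambda>^2) (1/2) - \<Lambda> * MP_P \<gamma> (\<Lambda>^2) 0 = \<Lambda> * \<rho> / (\<alpha> * (1 - \<rho>)))
                     \<longleftrightarrow> \<Lambda> = Lstar \<rho> \<beta> \<alpha>)
         \<and> (\<forall>\<Lambda>1 \<Lambda>2. 0 \<le> \<Lambda>1 \<and> \<Lambda>1 \<le> \<Lambda>2 \<longrightarrow>
               MP_P \<gamma> (\<Lambda>2^2) (1/2) - \<Lambda>2 * MP_P \<gamma> (\<Lambda>2^2) 0
             \<le> MP_P \<gamma> (\<Lambda>1^2) (1/2) - \<Lambda>1 * MP_P \<gamma> (\<Lambda>1^2) 0))"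
    if r: "0 < \<rho>" "\<rho> < 1" for \<rho>
  proof -
    have g: "0 < gg \<beta> \<rho>" "gg \<beta> \<rho> \<le> 1" using gg_bounds[OF r b] by auto
    have A: "\<forall>\<Lambda>\<ge>0. (MP_P (MPgamma \<rho> (\<beta> * \<rho>)) (\<Lambda>^2) (1/2) - \<Lambda> * MP_P (MPgamma \<rho> (\<beta> * \<rho>)) (\<Lambda>^2) 0
               = \<Lambda> * \<rho> / (\<alpha> * (1 - \<rho>))) \<longleftrightarrow> \<Lambda> = Lstar \<rho> \<beta> \<alpha>"
    proof (intro allI impI)
      fix La :: real assume L: "0 \<le> La"
      show "(MP_P (MPgamma \<rho> (\<beta> * \<rho>)) (La^2) (1/2) - La * MP_P (MPgamma \<rho> (\<beta> * \<rho>)) (La^2) 0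
               = La * \<rho> / (\<alpha> * (1 - \<rho>))) \<longleftrightarrow> La = Lstar \<rho> \<beta> \<alpha>"
        unfolding eq_iff_root[OF al b r L]
      proof
        assume "isroot \<alpha> \<beta> \<rho> La" thus "La = Lstar \<rho> \<beta> \<alpha>" by (rule per_rho(2)[OF al b r])
      next
        assume "La = Lstar \<rho> \<beta> \<alpha>" thus "isroot \<alpha> \<beta> \<rho> La" using per_rho(1)[OF al b r] by simp
      qed
    qed
    have B: "\<forall>\<Lambda>1 \<Lambda>2. 0 \<le> \<Lambda>1 \<and> \<Lambda>1 \<le> \<Lambda>2 \<longrightarrow>
               MP_P (MPgamma \<rho> (\<beta> * \<rho>)) (\<Lambda>2^2) (1/2) - \<Lambda>2 * MP_P (MPgamma \<rho> (\<beta> * \<rho>)) (\<Lambda>2^2) 0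
             \<le> MP_P (MPgamma \<rho> (\<beta> * \<rho>)) (\<Lambda>1^2) (1/2) - \<Lambda>1 * MP_P (MPgamma \<rho> (\<beta> * \<rho>)) (\<Lambda>1^2) 0"
    proof (intro allI impI)
      fix L1 L2 :: real assume L: "0 \<le> L1 \<and> L1 \<le> L2"
      have "GG (gg \<beta> \<rho>) L2 \<le> GG (gg \<beta> \<rho>) L1" using GG_anti[of "gg \<beta> \<rho>" L1 L2] g L by simp
      hence "GG (gg \<beta> \<rho>) L2 / gg \<beta> \<rho> \<le> GG (gg \<beta> \<rho>) L1 / gg \<beta> \<rho>" using g
        by (intro divide_right_mono) auto
      thus "MP_P (MPgamma \<rho> (\<beta> * \<rho>)) (L2^2) (1/2) - L2 * MP_P (MPgamma \<rho> (\<beta> * \<rho>)) (L2^2) 0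
             \<le> MP_P (MPgamma \<rho> (\<beta> * \<rho>)) (L1^2) (1/2) - L1 * MP_P (MPgamma \<rho> (\<beta> * \<rho>)) (L1^2) 0"
        unfolding MPgamma_eq[OF r b] using lemA[OF g, of L1] lemA[OF g, of L2] L by simp
    qed
    show ?thesis using per_rho(3)[OF al b r] A B unfolding Let_def by blast
  qed
  show ?thesis
  proof (intro conjI allI impI)
    fix \<rho>1 \<rho>2 :: real assume "0 \<le> \<rho>1 \<and> \<rho>1 \<le> \<rho>2 \<and> \<rho>2 \<le> 1"
    thus "Lstar \<rho>2 \<beta> \<alpha> \<le> Lstar \<rho>1 \<beta> \<alpha>" using Lstar_mono[OF al b] by auto
  next
    show "((\<lambda>\<rho>. Lstar \<rho> \<beta> \<alpha>) \<longlongrightarrow> 1 + sqrt \<beta>) (at_right 0)" by (rule lim0[OF al b])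
  next
    show "Lstar 0 \<beta> \<alpha> = 1 + sqrt \<beta>" unfolding Lstar_def by simp
  next
    show "((\<lambda>\<rho>. Lstar \<rho> \<beta> \<alpha>) \<longlongrightarrow> 0) (at_left 1)" by (rule lim1[OF al b])
  next
    show "Lstar 1 \<beta> \<alpha> = 0" unfolding Lstar_def by simp
  next
    fix \<rho> :: real assume "0 < \<rho> \<and> \<rho> < 1"
    thus "(\<exists>!\<Lambda>. 0 \<le> \<Lambda> \<and> (\<forall>L\<ge>0. Mfun \<Lambda> \<rho> (\<beta> * \<rho>) \<alpha> \<le> Mfun L \<rho> (\<beta> * \<rho>) \<alpha>))"
      using P6 by blast
  next
    fix \<rho> :: real assume "0 < \<rho> \<and> \<rho> < 1"
    thus "let \<gamma> = MPgamma \<rho> (\<beta> * \<rho>) in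
           (\<forall>\<Lambda>\<ge>0. (MP_P \<gamma> (\<Lambda>^2) (1/2) - \<Lambda> * MP_P \<gamma> (\<Lambda>^2) 0 = \<Lambda> * \<rho> / (\<alpha> * (1 - \<rho>)))
                     \<longleftrightarrow> \<Lambda> = Lstar \<rho> \<beta> \<alpha>)
         \<and> (\<forall>\<Lambda>1 \<Lambda>2. 0 \<le> \<Lambda>1 \<and> \<Lambda>1 \<le> \<Lambda>2 \<longrightarrow>
               MP_P \<gamma> (\<Lambda>2^2) (1/2) - \<Lambda>2 * MP_P \<gamma> (\<Lambda>2^2) 0
             \<le> MP_P \<gamma> (\<Lambda>1^2) (1/2) - \<Lambda>1 * MP_P \<gamma> (\<Lambda>1^2) 0)"
      using P6 by blast
  qed
qed

end
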